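(* Let $I\subseteq\mathbb{R}$ be an interval, $\phi:I\times\mathbb{R}^2\to\mathbb{C}$ a smooth function and $\widetilde{A}=\widetilde{A}_tdt+\widetilde{A}_1dx^1+\widetilde{A}_2dx^2$ a smooth real-valued $1$-form on $I\times\mathbb{R}^2$, with covariant derivatives $\widetilde{\mathbf{D}}_\alpha=\partial_\alpha+i\widetilde{A}_\alpha$ and curvature $\widetilde F=d\widetilde A$. Suppose $$\widetilde F_{t\bar z}=\bar\phi\,\widetilde{\mathbf{D}}_{\bar z}\phi,\qquad \widetilde F_{z\bar z}=\tfrac{1}{4i}|\phi|^2,\qquad i\widetilde{\mathbf{D}}_t\phi+4\widetilde{\mathbf{D}}_z\widetilde{\mathbf{D}}_{\bar z}\phi=0.$$ Then $$i\widetilde{\mathbf{D}}_t\widetilde{\mathbf{D}}_{\bar z}\phi+4\widetilde{\mathbf{D}}_z\widetilde{\mathbf{D}}_{\bar z}\widetilde{\mathbf{D}}_{\bar z}\phi=0,$$ $$i\widetilde{\mathbf{D}}_t\widetilde{\mathbf{D}}_{\bar z}\widetilde{\mathbf{D}}_{\bar z}\phi+4\widetilde{\mathbf{D}}_{\bar z}\widetilde{\mathbf{D}}_z\widetilde{\mathbf{D}}_{\bar z}\widetilde{\mathbf{D}}_{\bar z}\phi+\bar\phi\,(\widetilde{\mathbf{D}}_{\bar z}\phi)^2=0.$$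
   Context: Wirtinger derivatives: $\partial_z=\frac12\partial_1+\frac1{2i}\partial_2$, $\partial_{\bar z}=\frac12\partial_1-\frac1{2i}\partial_2$; correspondingly $\widetilde A_z=\frac12\widetilde A_1+\frac1{2i}\widetilde A_2$, $\widetilde A_{\bar z}=\frac12\widetilde A_1-\frac1{2i}\widetilde A_2$, $\widetilde{\mathbf{D}}_z=\partial_z+i\widetilde A_z$, $\widetilde{\mathbf{D}}_{\bar z}=\partial_{\bar z}+i\widetilde A_{\bar z}$. Curvature components: $\widetilde F_{t\bar z}=\widetilde F(\partial_t,\partial_{\bar z})=\frac12\widetilde F_{t1}-\frac1{2i}\widetilde F_{t2}$ and $\widetilde F_{z\bar z}=\widetilde F(\partial_z,\partial_{\bar z})=-\frac1{2i}\widetilde F_{12}$, where $\widetilde F_{\alpha\beta}=\partial_\alpha\widetilde A_\beta-\partial_\beta\widetilde A_\alpha$. *)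

theory Defs
  imports "HOL-Analysis.Analysis"
begin

text \<open>Functions on I x R^2 are represented in curried form  t x1 x2.
  Partial derivatives: in t (one-sided at endpoints of I, i.e. within I), in x1, in x2.\<close>

definition pdt :: "real set \<Rightarrow> (real \<Rightarrow> real \<Rightarrow> real \<Rightarrow> 'a::real_normed_vector)
    \<Rightarrow> real \<Rightarrow> real \<Rightarrow> real \<Rightarrow> 'a" where
  "pdt I f t x y = vector_derivative (\<lambda>s. f s x y) (at t within I)"

definition pd1 :: "(real \<Rightarrow> real \<Rightarrow> real \<Rightarrow> 'a::real_normed_vector)
    \<Rightarrow> real \<Rightarrow> real \<Rightarrow> real \<Rightarrow> 'a" where
  "pd1 f t x y = vector_derivative (\<lambda>s. f t s y) (at x)"

definition pd2 :: "(real \<Rightarrow> real \<Rightarrow> real \<Rightarrow> 'a::real_normed_vector)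
    \<Rightarrow> real \<Rightarrow> real \<Rightarrow> real \<Rightarrow> 'a" where
  "pd2 f t x y = vector_derivative (\<lambda>s. f t x s) (at y)"

definition pdir :: "real set \<Rightarrow> nat \<Rightarrow> (real \<Rightarrow> real \<Rightarrow> real \<Rightarrow> 'a::real_normed_vector)
    \<Rightarrow> real \<Rightarrow> real \<Rightarrow> real \<Rightarrow> 'a" where
  "pdir I n f = (if n = 0 then pdt I f else if n = 1 then pd1 f else pd2 f)"

definition smooth3 :: "real set \<Rightarrow> (real \<Rightarrow> real \<Rightarrow> real \<Rightarrow> 'a::real_normed_vector) \<Rightarrow> bool" where
  "smooth3 I f \<longleftrightarrow> (\<forall>ds :: nat list. let g = foldr (pdir I) ds f in
      continuous_on (I \<times> UNIV) (\<lambda>(t, x, y). g t x y) \<and>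
      (\<forall>t\<in>I. \<forall>x y. (\<lambda>s. g s x y) differentiable (at t within I) \<and>
                    (\<lambda>s. g t s y) differentiable (at x) \<and>
                    (\<lambda>s. g t x s) differentiable (at y)))"

definition Az :: "(real \<Rightarrow> real \<Rightarrow> real \<Rightarrow> real) \<Rightarrow> (real \<Rightarrow> real \<Rightarrow> real \<Rightarrow> real)
    \<Rightarrow> real \<Rightarrow> real \<Rightarrow> real \<Rightarrow> complex" where
  "Az A1 A2 t x y = (1/2) * of_real (A1 t x y) + 1 / (2 * \<i>) * of_real (A2 t x y)"

definition Azbar :: "(real \<Rightarrow> real \<Rightarrow> real \<Rightarrow> real) \<Rightarrow> (real \<Rightarrow> real \<Rightarrow> real \<Rightarrow> real)
    \<Rightarrow> real \<Rightarrow> real \<Rightarrow> real \<Rightarrow> complex" where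
  "Azbar A1 A2 t x y = (1/2) * of_real (A1 t x y) - 1 / (2 * \<i>) * of_real (A2 t x y)"

definition cDt :: "real set \<Rightarrow> (real \<Rightarrow> real \<Rightarrow> real \<Rightarrow> real)
    \<Rightarrow> (real \<Rightarrow> real \<Rightarrow> real \<Rightarrow> complex) \<Rightarrow> real \<Rightarrow> real \<Rightarrow> real \<Rightarrow> complex" where
  "cDt I At f t x y = pdt I f t x y + \<i> * of_real (At t x y) * f t x y"

definition cDz :: "(real \<Rightarrow> real \<Rightarrow> real \<Rightarrow> real) \<Rightarrow> (real \<Rightarrow> real \<Rightarrow> real \<Rightarrow> real)
    \<Rightarrow> (real \<Rightarrow> real \<Rightarrow> real \<Rightarrow> complex) \<Rightarrow> real \<Rightarrow> real \<Rightarrow> real \<Rightarrow> complex" where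
  "cDz A1 A2 f t x y = (1/2) * pd1 f t x y + 1 / (2 * \<i>) * pd2 f t x y
                        + \<i> * Az A1 A2 t x y * f t x y"

definition cDzbar :: "(real \<Rightarrow> real \<Rightarrow> real \<Rightarrow> real) \<Rightarrow> (real \<Rightarrow> real \<Rightarrow> real \<Rightarrow> real)
    \<Rightarrow> (real \<Rightarrow> real \<Rightarrow> real \<Rightarrow> complex) \<Rightarrow> real \<Rightarrow> real \<Rightarrow> real \<Rightarrow> complex" where
  "cDzbar A1 A2 f t x y = (1/2) * pd1 f t x y - 1 / (2 * \<i>) * pd2 f t x y
                        + \<i> * Azbar A1 A2 t x y * f t x y"

definition Ftzbar :: "real set \<Rightarrow> (real \<Rightarrow> real \<Rightarrow> real \<Rightarrow> real) \<Rightarrow> (real \<Rightarrow> real \<Rightarrow> real \<Rightarrow> real)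
    \<Rightarrow> (real \<Rightarrow> real \<Rightarrow> real \<Rightarrow> real) \<Rightarrow> real \<Rightarrow> real \<Rightarrow> real \<Rightarrow> complex" where
  "Ftzbar I At A1 A2 t x y =
     (1/2) * of_real (pdt I A1 t x y - pd1 At t x y)
     - 1 / (2 * \<i>) * of_real (pdt I A2 t x y - pd2 At t x y)"

definition Fzzbar :: "(real \<Rightarrow> real \<Rightarrow> real \<Rightarrow> real) \<Rightarrow> (real \<Rightarrow> real \<Rightarrow> real \<Rightarrow> real)
    \<Rightarrow> real \<Rightarrow> real \<Rightarrow> real \<Rightarrow> complex" where
  "Fzzbar A1 A2 t x y = - (1 / (2 * \<i>)) * of_real (pd1 A2 t x y - pd2 A1 t x y)"

end

theory Submission
  imports Defs
begin


lemma mvi: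
  fixes f :: "real \<Rightarrow> 'a::real_normed_vector"
  assumes "convex S" "\<And>x. x\<in>S \<Longrightarrow> (f has_vector_derivative f' x) (at x within S)"
    "\<And>x. x\<in>S \<Longrightarrow> norm (f' x) \<le> B" "a\<in>S" "b\<in>S"
  shows "norm (f b - f a) \<le> B * norm (b - a)"
proof (rule differentiable_bound[OF assms(1) _ _ assms(5,4)])
  show "(f has_derivative (\<lambda>h. h *\<^sub>R f' x)) (at x within S)" if "x\<in>S" for x
    using assms(2)[OF that] by (simp add: has_vector_derivative_def)
  show "onorm (\<lambda>h. h *\<^sub>R f' x) \<le> B" if "x\<in>S" for x
    using assms(3)[OF that] by (simp add: onorm_scaleR_left[OF bounded_linear_ident] onorm_id)
qed




lemma clairaut:
  fixes F Fa Fb Fab Fba :: "real \<Rightarrow> real \<Rightarrow> 'a::real_normed_vector"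
  assumes S: "convex S" and T: "convex T" and a: "a\<in>S" and b: "b\<in>T"
    and la: "a islimpt S" and lb: "b islimpt T"
    and dA: "\<And>u v. u\<in>S \<Longrightarrow> v\<in>T \<Longrightarrow> ((\<lambda>s. F s v) has_vector_derivative Fa u v) (at u within S)"
    and dB: "\<And>u v. u\<in>S \<Longrightarrow> v\<in>T \<Longrightarrow> ((\<lambda>s. F u s) has_vector_derivative Fb u v) (at v within T)"
    and dAB: "\<And>u v. u\<in>S \<Longrightarrow> v\<in>T \<Longrightarrow> ((\<lambda>s. Fa u s) has_vector_derivative Fab u v) (at v within T)"
    and dBA: "\<And>u v. u\<in>S \<Longrightarrow> v\<in>T \<Longrightarrow> ((\<lambda>s. Fb s v) has_vector_derivative Fba u v) (at u within S)"
    and cAB: "continuous_on (S\<times>T) (\<lambda>p. Fab (fst p) (snd p))"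
    and cBA: "continuous_on (S\<times>T) (\<lambda>p. Fba (fst p) (snd p))"
  shows "Fab a b = Fba a b"
proof (rule ccontr)
  assume ne: "Fab a b \<noteq> Fba a b"
  define d where "d = norm (Fab a b - Fba a b)"
  have d: "d > 0" using ne by (simp add: d_def)
  define e where "e = d/8"
  have e: "e > 0" using d by (simp add: e_def)
  have ab: "(a,b) \<in> S\<times>T" using a b by simp
  obtain d1 where d1: "d1 > 0" and d1P: "\<And>p. p\<in>S\<times>T \<Longrightarrow> dist p (a,b) < d1 \<Longrightarrow> dist (Fab (fst p) (snd p)) (Fab a b) < e"
    using cAB ab e unfolding continuous_on_iff by (metis fst_conv snd_conv)
  obtain d2 where d2: "d2 > 0" and d2P: "\<And>p. p\<in>S\<times>T \<Longrightarrow> dist p (a,b) < d2 \<Longrightarrow> dist (Fba (fst p) (snd p)) (Fba a b) < e"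
    using cBA ab e unfolding continuous_on_iff by (metis fst_conv snd_conv)
  define \<delta> where "\<delta> = min d1 d2"
  have \<delta>: "\<delta> > 0" using d1 d2 by (simp add: \<delta>_def)
  have close: "norm (Fab u v - Fab a b) \<le> e \<and> norm (Fba u v - Fba a b) \<le> e"
    if "u\<in>S" "v\<in>T" "dist u a < \<delta>/2" "dist v b < \<delta>/2" for u v
  proof -
    have "dist (u,v) (a,b) \<le> dist u a + dist v b"
      by (simp add: dist_Pair_Pair sqrt_sum_squares_le_sum)
    then have "dist (u,v) (a,b) < \<delta>" using that by simp
    then show ?thesis using d1P[of "(u,v)"] d2P[of "(u,v)"] that
      by (auto simp: \<delta>_def dist_norm)
  qed
  obtain u1 where u1: "u1 \<in> S" "u1 \<noteq> a" "dist u1 a < \<delta>/2"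
    using la \<delta> unfolding islimpt_approachable by (metis half_gt_zero)
  obtain v1 where v1: "v1 \<in> T" "v1 \<noteq> b" "dist v1 b < \<delta>/2"
    using lb \<delta> unfolding islimpt_approachable by (metis half_gt_zero)
  define h where "h = u1 - a"
  define k where "k = v1 - b"
  have segS: "closed_segment a u1 \<subseteq> S" using S a u1(1) by (simp add: closed_segment_subset)
  have segT: "closed_segment b v1 \<subseteq> T" using T b v1(1) by (simp add: closed_segment_subset)
  have inS: "u \<in> S" "dist u a < \<delta>/2" if "u \<in> closed_segment a u1" for u
    using that segS u1 apply blast
    using that u1(3) by (smt (verit) dist_commute dist_in_closed_segment)
  have inT: "v \<in> T" "dist v b < \<delta>/2" if "v \<in> closed_segment b v1" for v
    using that segT v1 apply blast
    using that v1(3) by (smt (verit) dist_commute dist_in_closed_segment)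
  have stepA: "norm (Fa u v1 - Fa u b - (v1 - b) *\<^sub>R Fab a b) \<le> e * norm (v1 - b)"
    if u: "u \<in> closed_segment a u1" for u
  proof -
    have "norm ((\<lambda>v. Fa u v - (v - b) *\<^sub>R Fab a b) v1 - (\<lambda>v. Fa u v - (v - b) *\<^sub>R Fab a b) b)
          \<le> e * norm (v1 - b)"
    proof (rule mvi[of "closed_segment b v1" _ "\<lambda>v. Fab u v - Fab a b"])
      show "convex (closed_segment b v1)" by simp
      show "b \<in> closed_segment b v1" "v1 \<in> closed_segment b v1" by auto
      fix v assume v: "v \<in> closed_segment b v1"
      show "((\<lambda>v. Fa u v - (v - b) *\<^sub>R Fab a b) has_vector_derivative Fab u v - Fab a b)
             (at v within closed_segment b v1)"
        apply (rule derivative_eq_intros)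
          apply (rule has_vector_derivative_within_subset[OF dAB[OF inS(1)[OF u] inT(1)[OF v]] segT])
         apply (rule derivative_eq_intros | simp)+
        done
      show "norm (Fab u v - Fab a b) \<le> e" using close[OF inS(1)[OF u] inT(1)[OF v] inS(2)[OF u] inT(2)[OF v]] by simp
    qed
    then show ?thesis by (simp add: algebra_simps)
  qed
  have stepB: "norm ((F u1 v1 - F u1 b - (h*k) *\<^sub>R Fab a b) - (F a v1 - F a b)) \<le> e * norm k * norm h"
  proof -
    have "norm ((\<lambda>u. F u v1 - F u b - ((u - a) * k) *\<^sub>R Fab a b) u1 - (\<lambda>u. F u v1 - F u b - ((u - a) * k) *\<^sub>R Fab a b) a)
          \<le> (e * norm k) * norm (u1 - a)"
    proof (rule mvi[of "closed_segment a u1" _ "\<lambda>u. Fa u v1 - Fa u b - k *\<^sub>R Fab a b"])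
      show "convex (closed_segment a u1)" by simp
      show "a \<in> closed_segment a u1" "u1 \<in> closed_segment a u1" by auto
      fix u assume u: "u \<in> closed_segment a u1"
      have dd: "((\<lambda>u. (u - a) * k) has_real_derivative k) (at u within closed_segment a u1)"
        by (rule derivative_eq_intros | simp)+
      show "((\<lambda>u. F u v1 - F u b - ((u - a) * k) *\<^sub>R Fab a b) has_vector_derivative Fa u v1 - Fa u b - k *\<^sub>R Fab a b)
             (at u within closed_segment a u1)"
        apply (intro has_vector_derivative_diff)
          apply (rule has_vector_derivative_within_subset[OF dA[OF inS(1)[OF u] v1(1)] segS])
         apply (rule has_vector_derivative_within_subset[OF dA[OF inS(1)[OF u] b] segS])
        using has_vector_derivative_scaleR[OF dd has_vector_derivative_const]
        by simp
      show "norm (Fa u v1 - Fa u b - k *\<^sub>R Fab a b) \<le> e * norm k"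
        using stepA[OF u] by (simp add: k_def)
    qed
    then show ?thesis by (simp add: h_def algebra_simps)
  qed
  have stepA': "norm (Fb u1 v - Fb a v - (u1 - a) *\<^sub>R Fba a b) \<le> e * norm (u1 - a)"
    if v: "v \<in> closed_segment b v1" for v
  proof -
    have "norm ((\<lambda>u. Fb u v - (u - a) *\<^sub>R Fba a b) u1 - (\<lambda>u. Fb u v - (u - a) *\<^sub>R Fba a b) a)
          \<le> e * norm (u1 - a)"
    proof (rule mvi[of "closed_segment a u1" _ "\<lambda>u. Fba u v - Fba a b"])
      show "convex (closed_segment a u1)" by simp
      show "a \<in> closed_segment a u1" "u1 \<in> closed_segment a u1" by auto
      fix u assume u: "u \<in> closed_segment a u1"
      show "((\<lambda>u. Fb u v - (u - a) *\<^sub>R Fba a b) has_vector_derivative Fba u v - Fba a b)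
             (at u within closed_segment a u1)"
        apply (rule derivative_eq_intros)
          apply (rule has_vector_derivative_within_subset[OF dBA[OF inS(1)[OF u] inT(1)[OF v]] segS])
         apply (rule derivative_eq_intros | simp)+
        done
      show "norm (Fba u v - Fba a b) \<le> e" using close[OF inS(1)[OF u] inT(1)[OF v] inS(2)[OF u] inT(2)[OF v]] by simp
    qed
    then show ?thesis by (simp add: algebra_simps)
  qed
  have stepB': "norm ((F u1 v1 - F a v1 - (h*k) *\<^sub>R Fba a b) - (F u1 b - F a b)) \<le> e * norm h * norm k"
  proof -
    have "norm ((\<lambda>v. F u1 v - F a v - ((v - b) * h) *\<^sub>R Fba a b) v1 - (\<lambda>v. F u1 v - F a v - ((v - b) * h) *\<^sub>R Fba a b) b)
          \<le> (e * norm h) * norm (v1 - b)"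
    proof (rule mvi[of "closed_segment b v1" _ "\<lambda>v. Fb u1 v - Fb a v - h *\<^sub>R Fba a b"])
      show "convex (closed_segment b v1)" by simp
      show "b \<in> closed_segment b v1" "v1 \<in> closed_segment b v1" by auto
      fix v assume v: "v \<in> closed_segment b v1"
      have dd: "((\<lambda>v. (v - b) * h) has_real_derivative h) (at v within closed_segment b v1)"
        by (rule derivative_eq_intros | simp)+
      show "((\<lambda>v. F u1 v - F a v - ((v - b) * h) *\<^sub>R Fba a b) has_vector_derivative Fb u1 v - Fb a v - h *\<^sub>R Fba a b)
             (at v within closed_segment b v1)"
        apply (intro has_vector_derivative_diff)
          apply (rule has_vector_derivative_within_subset[OF dB[OF u1(1) inT(1)[OF v]] segT])
         apply (rule has_vector_derivative_within_subset[OF dB[OF a inT(1)[OF v]] segT])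
        using has_vector_derivative_scaleR[OF dd has_vector_derivative_const]
        by simp
      show "norm (Fb u1 v - Fb a v - h *\<^sub>R Fba a b) \<le> e * norm h"
        using stepA'[OF v] by (simp add: h_def)
    qed
    then show ?thesis by (simp add: k_def algebra_simps)
  qed
  have eq: "(h*k) *\<^sub>R (Fab a b - Fba a b) =
     ((F u1 v1 - F a v1 - (h*k) *\<^sub>R Fba a b) - (F u1 b - F a b))
     - ((F u1 v1 - F u1 b - (h*k) *\<^sub>R Fab a b) - (F a v1 - F a b))"
    by (simp add: algebra_simps)
  have "norm ((h*k) *\<^sub>R (Fab a b - Fba a b)) \<le> e * norm h * norm k + e * norm k * norm h"
    unfolding eq by (rule order_trans[OF norm_triangle_ineq4]) (use stepB stepB' in linarith)
  moreover have "norm ((h*k) *\<^sub>R (Fab a b - Fba a b)) = \<bar>h\<bar> * \<bar>k\<bar> * d"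
    by (simp add: d_def abs_mult)
  ultimately have "\<bar>h\<bar> * \<bar>k\<bar> * d \<le> 2 * e * (\<bar>h\<bar> * \<bar>k\<bar>)"
    by (simp add: algebra_simps)
  moreover have "\<bar>h\<bar> * \<bar>k\<bar> > 0" using u1 v1 by (simp add: h_def k_def)
  moreover have "2 * e * (\<bar>h\<bar> * \<bar>k\<bar>) < d * (\<bar>h\<bar> * \<bar>k\<bar>)"
    using d calculation(2) by (intro mult_strict_right_mono) (auto simp: e_def)
  ultimately show False by (simp add: algebra_simps)
qed




definition pt :: "nat \<Rightarrow> real \<Rightarrow> real \<Rightarrow> real \<Rightarrow> real" where
  "pt n t x y = (if n = 0 then t else if n = 1 then x else y)"
definition dm :: "real set \<Rightarrow> nat \<Rightarrow> real set" where
  "dm I n = (if n = 0 then I else UNIV)"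
definition line :: "nat \<Rightarrow> (real \<Rightarrow> real \<Rightarrow> real \<Rightarrow> 'a) \<Rightarrow> real \<Rightarrow> real \<Rightarrow> real \<Rightarrow> real \<Rightarrow> 'a" where
  "line n h t x y = (\<lambda>s. if n = 0 then h s x y else if n = 1 then h t s y else h t x s)"

lemma pdir_line: "pdir I n h t x y = vector_derivative (line n h t x y) (at (pt n t x y) within dm I n)"
  by (simp add: pdir_def pdt_def pd1_def pd2_def line_def pt_def dm_def)

lemma pt_dm: "t \<in> I \<Longrightarrow> pt n t x y \<in> dm I n"
  by (simp add: pt_def dm_def)

lemma vd_cong:
  assumes "p \<in> S" "\<And>s. s \<in> S \<Longrightarrow> f s = g s"
  shows "vector_derivative f (at p within S) = vector_derivative g (at p within S)"
proof -
  have "\<And>f'. (f has_vector_derivative f') (at p within S) \<longleftrightarrow> (g has_vector_derivative f') (at p within S)"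
    using has_vector_derivative_transform[OF assms(1)] assms(2) by metis
  then show ?thesis unfolding vector_derivative_def by simp
qed

lemma diff_cong:
  assumes "p \<in> S" "\<And>s. s \<in> S \<Longrightarrow> f s = g s" "f differentiable (at p within S)"
  shows "g differentiable (at p within S)"
  using assms has_derivative_transform[OF assms(1)] unfolding differentiable_def by metis

definition agree :: "real set \<Rightarrow> (real \<Rightarrow> real \<Rightarrow> real \<Rightarrow> 'a) \<Rightarrow> (real \<Rightarrow> real \<Rightarrow> real \<Rightarrow> 'a) \<Rightarrow> bool" where
  "agree I f g \<longleftrightarrow> (\<forall>t\<in>I. \<forall>x y. f t x y = g t x y)"

lemma agree_refl: "agree I f f" by (simp add: agree_def)
lemma agree_trans: "agree I f g \<Longrightarrow> agree I g h \<Longrightarrow> agree I f h" by (simp add: agree_def)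

lemma line_agree: "agree I f g \<Longrightarrow> t \<in> I \<Longrightarrow> s \<in> dm I n \<Longrightarrow> line n f t x y s = line n g t x y s"
  by (auto simp: agree_def line_def dm_def split: if_splits)

lemma agree_sym: "agree I f g \<Longrightarrow> agree I g f" by (simp add: agree_def)

lemma pdir_cong:
  assumes a: "agree I f g" shows "agree I (pdir I n f) (pdir I n g)"
  unfolding agree_def[of I "pdir I n f"]
proof (intro ballI allI)
  fix t x y assume t: "t \<in> I"
  show "pdir I n f t x y = pdir I n g t x y"
    unfolding pdir_line by (rule vd_cong[OF pt_dm[OF t] line_agree[OF a t]])
qed

lemma foldr_cong: "agree I f g \<Longrightarrow> agree I (foldr (pdir I) ds f) (foldr (pdir I) ds g)"
  by (induction ds) (simp_all add: pdir_cong)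

definition ok :: "real set \<Rightarrow> (real \<Rightarrow> real \<Rightarrow> real \<Rightarrow> 'a::real_normed_vector) \<Rightarrow> bool" where
  "ok I h \<longleftrightarrow> continuous_on (I \<times> UNIV) (\<lambda>(t, x, y). h t x y) \<and>
     (\<forall>t\<in>I. \<forall>x y n. line n h t x y differentiable (at (pt n t x y) within dm I n))"





lemma smooth3_ok: "smooth3 I f \<longleftrightarrow> (\<forall>ds. ok I (foldr (pdir I) ds f))"
proof -
  have pw: "(\<forall>n. line n h t x y differentiable (at (pt n t x y) within dm I n)) \<longleftrightarrow>
     ((\<lambda>s. h s x y) differentiable (at t within I) \<and> (\<lambda>s. h t s y) differentiable (at x) \<and>
                    (\<lambda>s. h t x s) differentiable (at y))" for h :: "real \<Rightarrow> real \<Rightarrow> real \<Rightarrow> 'a" and t x y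
  proof
    assume "\<forall>n. line n h t x y differentiable (at (pt n t x y) within dm I n)"
    from this[rule_format, of 0] this[rule_format, of 1] this[rule_format, of 2]
    show "(\<lambda>s. h s x y) differentiable (at t within I) \<and> (\<lambda>s. h t s y) differentiable (at x) \<and>
                    (\<lambda>s. h t x s) differentiable (at y)"
      by (simp add: line_def pt_def dm_def)
  next
    assume "(\<lambda>s. h s x y) differentiable (at t within I) \<and> (\<lambda>s. h t s y) differentiable (at x) \<and>
                    (\<lambda>s. h t x s) differentiable (at y)"
    then show "\<forall>n. line n h t x y differentiable (at (pt n t x y) within dm I n)"
    proof (intro allI)
      fix n :: nat
      assume a: "(\<lambda>s. h s x y) differentiable (at t within I) \<and> (\<lambda>s. h t s y) differentiable (at x) \<and>
                    (\<lambda>s. h t x s) differentiable (at y)"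
      consider "n = 0" | "n = 1" | "n \<noteq> 0 \<and> n \<noteq> 1" by blast
      then show "line n h t x y differentiable (at (pt n t x y) within dm I n)"
        by cases (use a in \<open>simp_all add: line_def pt_def dm_def\<close>)
    qed
  qed
  have eq: "(\<forall>t\<in>I. \<forall>x y n. line n h t x y differentiable (at (pt n t x y) within dm I n)) \<longleftrightarrow>
     (\<forall>t\<in>I. \<forall>x y. (\<lambda>s. h s x y) differentiable (at t within I) \<and> (\<lambda>s. h t s y) differentiable (at x) \<and>
                    (\<lambda>s. h t x s) differentiable (at y))" for h :: "real \<Rightarrow> real \<Rightarrow> real \<Rightarrow> 'a"
    by (simp only: pw)
  show ?thesis by (simp only: smooth3_def ok_def Let_def eq)
qed





lemma ok_cong:
  assumes "agree I f g" "ok I f" shows "ok I g"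
  unfolding ok_def
proof
  have c: "continuous_on (I \<times> UNIV) (\<lambda>(t, x, y). f t x y)" using assms(2) by (simp add: ok_def)
  have e: "\<And>p. p \<in> I \<times> UNIV \<Longrightarrow> (\<lambda>(t, x, y). f t x y) p = (\<lambda>(t, x, y). g t x y) p"
    using assms(1) by (auto simp: agree_def)
  show "continuous_on (I \<times> UNIV) (\<lambda>(t, x, y). g t x y)"
    using continuous_on_cong[OF refl e] c by (rule iffD1)
  show "\<forall>t\<in>I. \<forall>x y n. line n g t x y differentiable (at (pt n t x y) within dm I n)"
  proof (intro ballI allI)
    fix t x y n assume t: "t \<in> I"
    have d: "line n f t x y differentiable (at (pt n t x y) within dm I n)"
      using assms(2) t by (simp add: ok_def)
    show "line n g t x y differentiable (at (pt n t x y) within dm I n)"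
      using diff_cong[OF pt_dm[OF t] line_agree[OF assms(1) t] d] .
  qed
qed

lemma smooth3_class:
  assumes okQ: "\<And>h. Q h \<Longrightarrow> ok I h"
    and stepQ: "\<And>h n. Q h \<Longrightarrow> \<exists>h'. Q h' \<and> agree I (pdir I n h) h'"
    and f: "Q f"
  shows "smooth3 I f"
proof -
  have "\<exists>h'. Q h' \<and> agree I (foldr (pdir I) ds f) h'" for ds
  proof (induction ds)
    case Nil then show ?case using f agree_refl by auto
  next
    case (Cons n ds)
    then obtain h1 where h1: "Q h1" "agree I (foldr (pdir I) ds f) h1" by blast
    obtain h2 where h2: "Q h2" "agree I (pdir I n h1) h2" using stepQ[OF h1(1)] by blast
    show ?case using h2 agree_trans[OF pdir_cong[OF h1(2)] h2(2)] by auto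
  qed
  then show ?thesis unfolding smooth3_ok
  proof (intro allI)
    fix ds
    assume *: "\<And>ds. \<exists>h'. Q h' \<and> agree I (foldr (pdir I) ds f) h'"
    obtain h' where "Q h'" "agree I (foldr (pdir I) ds f) h'" using * by blast
    then show "ok I (foldr (pdir I) ds f)" using ok_cong[OF agree_sym okQ] by blast
  qed
qed

lemma smooth3_pdir: "smooth3 I f \<Longrightarrow> smooth3 I (pdir I n f)"
  unfolding smooth3_ok
proof (intro allI)
  fix ds assume "\<forall>ds. ok I (foldr (pdir I) ds f)"
  then have "ok I (foldr (pdir I) (ds @ [n]) f)" by blast
  then show "ok I (foldr (pdir I) ds (pdir I n f))" by simp
qed



locale ctx =
  fixes I :: "real set"
  assumes conv: "convex I" and lim: "\<And>t. t \<in> I \<Longrightarrow> t islimpt I"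
begin

lemma nbot: "t \<in> I \<Longrightarrow> at (pt n t x y) within dm I n \<noteq> bot"
  using lim by (auto simp: pt_def dm_def trivial_limit_within)

lemma vd_lin:
  assumes "bounded_linear L" "t \<in> I" "line n h t x y differentiable (at (pt n t x y) within dm I n)"
  shows "vector_derivative (\<lambda>s. L (line n h t x y s)) (at (pt n t x y) within dm I n)
         = L (vector_derivative (line n h t x y) (at (pt n t x y) within dm I n))"
  using vector_derivative_within[OF nbot[OF assms(2)]
      bounded_linear.has_vector_derivative[OF assms(1) assms(3)[unfolded vector_derivative_works]]] .

lemma vd_add:
  assumes "t \<in> I" "f differentiable (at (pt n t x y) within dm I n)" "g differentiable (at (pt n t x y) within dm I n)"
  shows "vector_derivative (\<lambda>s. f s + g s) (at (pt n t x y) within dm I n)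
         = vector_derivative f (at (pt n t x y) within dm I n) + vector_derivative g (at (pt n t x y) within dm I n)"
  using vector_derivative_within[OF nbot[OF assms(1)]
      has_vector_derivative_add[OF assms(2)[unfolded vector_derivative_works] assms(3)[unfolded vector_derivative_works]]] .

lemma vd_mult:
  fixes f g :: "real \<Rightarrow> 'a::real_normed_algebra"
  assumes "t \<in> I" "f differentiable (at (pt n t x y) within dm I n)" "g differentiable (at (pt n t x y) within dm I n)"
  shows "vector_derivative (\<lambda>s. f s * g s) (at (pt n t x y) within dm I n)
         = f (pt n t x y) * vector_derivative g (at (pt n t x y) within dm I n) + vector_derivative f (at (pt n t x y) within dm I n) * g (pt n t x y)"
  using vector_derivative_within[OF nbot[OF assms(1)]
      has_vector_derivative_mult[OF assms(2)[unfolded vector_derivative_works] assms(3)[unfolded vector_derivative_works]]] .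

lemma vd_const:
  assumes "t \<in> I"
  shows "vector_derivative (\<lambda>s. c) (at (pt n t x y) within dm I n) = 0"
  using vector_derivative_within[OF nbot[OF assms(1)] has_vector_derivative_const] .

lemma line_pt: "line n h t x y (pt n t x y) = h t x y"
  by (simp add: line_def pt_def)

end




lemma diff_lin: "bounded_linear L \<Longrightarrow> g differentiable F \<Longrightarrow> (\<lambda>s. L (g s)) differentiable F"
  unfolding differentiable_def using bounded_linear.has_derivative by blast

lemma line_lin: "line n (\<lambda>t x y. L (h t x y)) t x y = (\<lambda>s. L (line n h t x y s))"
  by (rule ext) (simp add: line_def)
lemma line_add: "line n (\<lambda>t x y. f t x y + g t x y) t x y = (\<lambda>s. line n f t x y s + line n g t x y s)"
  by (rule ext) (simp add: line_def)
lemma line_mult: "line n (\<lambda>t x y. f t x y * g t x y) t x y = (\<lambda>s. line n f t x y s * line n g t x y s)"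
  by (rule ext) (simp add: line_def)
lemma line_const: "line n (\<lambda>t x y. c) t x y = (\<lambda>s. c)"
  by (rule ext) (simp add: line_def)

lemma ok_lin:
  assumes L: "bounded_linear L" and h: "ok I h" shows "ok I (\<lambda>t x y. L (h t x y))"
proof -
  have c: "continuous_on (I \<times> UNIV) (\<lambda>(t, x, y). h t x y)" using h by (simp add: ok_def)
  have eq: "(\<lambda>p. L ((\<lambda>(t, x, y). h t x y) p)) = (\<lambda>(t, x, y). L (h t x y))" by auto
  have "continuous_on (I \<times> UNIV) (\<lambda>(t, x, y). L (h t x y))"
    unfolding eq[symmetric] by (rule bounded_linear.continuous_on[OF L c])
  then show ?thesis using h L unfolding ok_def line_lin by (auto intro: diff_lin)
qed

lemma ok_add:
  assumes f: "ok I f" and g: "ok I g" shows "ok I (\<lambda>t x y. f t x y + g t x y)"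
proof -
  have eq: "(\<lambda>p. (\<lambda>(t, x, y). f t x y) p + (\<lambda>(t, x, y). g t x y) p) = (\<lambda>(t, x, y). f t x y + g t x y)" by auto
  have "continuous_on (I \<times> UNIV) (\<lambda>(t, x, y). f t x y + g t x y)"
    unfolding eq[symmetric] using f g by (intro continuous_on_add) (simp_all add: ok_def)
  then show ?thesis using f g unfolding ok_def line_add by auto
qed

lemma ok_mult:
  fixes f g :: "real \<Rightarrow> real \<Rightarrow> real \<Rightarrow> complex"
  assumes f: "ok I f" and g: "ok I g" shows "ok I (\<lambda>t x y. f t x y * g t x y)"
proof -
  have eq: "(\<lambda>p. (\<lambda>(t, x, y). f t x y) p * (\<lambda>(t, x, y). g t x y) p) = (\<lambda>(t, x, y). f t x y * g t x y)" by auto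
  have "continuous_on (I \<times> UNIV) (\<lambda>(t, x, y). f t x y * g t x y)"
    unfolding eq[symmetric] using f g by (intro continuous_on_mult) (simp_all add: ok_def)
  then show ?thesis using f g unfolding ok_def line_mult by auto
qed

lemma ok_const: "ok I (\<lambda>t x y. c)"
  unfolding ok_def line_const by (auto intro: continuous_on_const)

inductive gen :: "real set \<Rightarrow> (real \<Rightarrow> real \<Rightarrow> real \<Rightarrow> complex) \<Rightarrow> (real \<Rightarrow> real \<Rightarrow> real \<Rightarrow> complex)
   \<Rightarrow> (real \<Rightarrow> real \<Rightarrow> real \<Rightarrow> complex) \<Rightarrow> bool" for I f g where
  gbase: "gen I f g (\<lambda>t x y. foldr (pdir I) a f t x y * foldr (pdir I) b g t x y)"
| gadd: "gen I f g h1 \<Longrightarrow> gen I f g h2 \<Longrightarrow> gen I f g (\<lambda>t x y. h1 t x y + h2 t x y)"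

lemma sm_ok: "smooth3 I f \<Longrightarrow> ok I (foldr (pdir I) ds f)"
  by (simp add: smooth3_ok)

lemma sm_ok0: "smooth3 I f \<Longrightarrow> ok I f"
  using sm_ok[of I f "[]"] by simp

lemma ok_diff: "ok I f \<Longrightarrow> t \<in> I \<Longrightarrow> line n f t x y differentiable (at (pt n t x y) within dm I n)"
  by (simp add: ok_def)

context ctx
begin

lemma pdir_lin_raw:
  "bounded_linear L \<Longrightarrow> t \<in> I \<Longrightarrow> ok I h \<Longrightarrow>
   pdir I n (\<lambda>t x y. L (h t x y)) t x y = L (pdir I n h t x y)"
  unfolding pdir_line line_lin by (rule vd_lin) (auto intro: ok_diff)

lemma pdir_add_raw:
  "t \<in> I \<Longrightarrow> ok I f \<Longrightarrow> ok I g \<Longrightarrow>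
   pdir I n (\<lambda>t x y. f t x y + g t x y) t x y = pdir I n f t x y + pdir I n g t x y"
  unfolding pdir_line line_add by (rule vd_add) (auto intro: ok_diff)

lemma pdir_mult_raw:
  fixes f g :: "real \<Rightarrow> real \<Rightarrow> real \<Rightarrow> complex"
  shows "t \<in> I \<Longrightarrow> ok I f \<Longrightarrow> ok I g \<Longrightarrow>
   pdir I n (\<lambda>t x y. f t x y * g t x y) t x y = pdir I n f t x y * g t x y + f t x y * pdir I n g t x y"
  unfolding pdir_line line_mult
  by (subst vd_mult) (auto intro: ok_diff simp: line_pt)

lemma pdir_const_raw: "t \<in> I \<Longrightarrow> pdir I n (\<lambda>t x y. c) t x y = 0"
  unfolding pdir_line line_const by (rule vd_const)

lemma smooth3_lin:
  assumes L: "bounded_linear L" and f: "smooth3 I f"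
  shows "smooth3 I (\<lambda>t x y. L (f t x y))"
proof (rule smooth3_class[where Q = "\<lambda>h. \<exists>ds. h = (\<lambda>t x y. L (foldr (pdir I) ds f t x y))"])
  show "ok I h" if "\<exists>ds. h = (\<lambda>t x y. L (foldr (pdir I) ds f t x y))" for h
    using that ok_lin[OF L sm_ok[OF f]] by blast
  show "\<exists>h'. (\<exists>ds. h' = (\<lambda>t x y. L (foldr (pdir I) ds f t x y))) \<and> agree I (pdir I n h) h'"
    if "\<exists>ds. h = (\<lambda>t x y. L (foldr (pdir I) ds f t x y))" for h n
  proof -
    note hQ = that
    obtain ds where h: "h = (\<lambda>t x y. L (foldr (pdir I) ds f t x y))" using hQ by blast
    have "agree I (pdir I n h) (\<lambda>t x y. L (foldr (pdir I) (n # ds) f t x y))"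
      unfolding agree_def h using pdir_lin_raw[OF L _ sm_ok[OF f]] by simp
    then show ?thesis by blast
  qed
  show "\<exists>ds. (\<lambda>t x y. L (f t x y)) = (\<lambda>t x y. L (foldr (pdir I) ds f t x y))"
    by (rule exI[of _ "[]"]) simp
qed

lemma smooth3_add:
  assumes f: "smooth3 I f" and g: "smooth3 I g"
  shows "smooth3 I (\<lambda>t x y. f t x y + g t x y)"
proof (rule smooth3_class[where Q = "\<lambda>h. \<exists>ds. h = (\<lambda>t x y. foldr (pdir I) ds f t x y + foldr (pdir I) ds g t x y)"])
  show "ok I h" if "\<exists>ds. h = (\<lambda>t x y. foldr (pdir I) ds f t x y + foldr (pdir I) ds g t x y)" for h
    using that ok_add[OF sm_ok[OF f] sm_ok[OF g]] by blast
  show "\<exists>h'. (\<exists>ds. h' = (\<lambda>t x y. foldr (pdir I) ds f t x y + foldr (pdir I) ds g t x y)) \<and> agree I (pdir I n h) h'"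
    if "\<exists>ds. h = (\<lambda>t x y. foldr (pdir I) ds f t x y + foldr (pdir I) ds g t x y)" for h n
  proof -
    note hQ = that
    obtain ds where h: "h = (\<lambda>t x y. foldr (pdir I) ds f t x y + foldr (pdir I) ds g t x y)" using hQ by blast
    have "agree I (pdir I n h) (\<lambda>t x y. foldr (pdir I) (n # ds) f t x y + foldr (pdir I) (n # ds) g t x y)"
      unfolding agree_def h using pdir_add_raw[OF _ sm_ok[OF f] sm_ok[OF g]] by simp
    then show ?thesis by blast
  qed
  show "\<exists>ds. (\<lambda>t x y. f t x y + g t x y) = (\<lambda>t x y. foldr (pdir I) ds f t x y + foldr (pdir I) ds g t x y)"
    by (rule exI[of _ "[]"]) simp
qed

lemma smooth3_const: "smooth3 I (\<lambda>t x y. c)"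
proof (rule smooth3_class[where Q = "\<lambda>h. h = (\<lambda>t x y. c) \<or> h = (\<lambda>t x y. 0)"])
  show "ok I h" if "h = (\<lambda>t x y. c) \<or> h = (\<lambda>t x y. 0)" for h
    using that ok_const by blast
  show "\<exists>h'. (h' = (\<lambda>t x y. c) \<or> h' = (\<lambda>t x y. 0)) \<and> agree I (pdir I n h) h'"
    if "h = (\<lambda>t x y. c) \<or> h = (\<lambda>t x y. 0)" for h n
  proof -
    have "agree I (pdir I n h) (\<lambda>t x y. 0)"
      using that unfolding agree_def by (auto simp: pdir_const_raw)
    then show ?thesis by blast
  qed
qed simp

lemma gen_ok: assumes "smooth3 I f" "smooth3 I g" shows "gen I f g h \<Longrightarrow> ok I h"
  by (induction rule: gen.induct) (auto intro: ok_mult ok_add sm_ok assms)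

lemma gen_step:
  assumes f: "smooth3 I f" and g: "smooth3 I g"
  shows "gen I f g h \<Longrightarrow> \<exists>h'. gen I f g h' \<and> agree I (pdir I n h) h'"
proof (induction rule: gen.induct)
  case (gbase a b)
  let ?h' = "\<lambda>t x y. foldr (pdir I) (n # a) f t x y * foldr (pdir I) b g t x y
                   + foldr (pdir I) a f t x y * foldr (pdir I) (n # b) g t x y"
  have "gen I f g ?h'" by (intro gen.intros)
  moreover have "agree I (pdir I n (\<lambda>t x y. foldr (pdir I) a f t x y * foldr (pdir I) b g t x y)) ?h'"
    unfolding agree_def using pdir_mult_raw[OF _ sm_ok[OF f] sm_ok[OF g]] by simp
  ultimately show ?case by blast
next
  case (gadd h1 h2)
  obtain h1' where h1: "gen I f g h1'" "agree I (pdir I n h1) h1'" using gadd.IH(1) by blast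
  obtain h2' where h2: "gen I f g h2'" "agree I (pdir I n h2) h2'" using gadd.IH(2) by blast
  have "gen I f g (\<lambda>t x y. h1' t x y + h2' t x y)" using h1 h2 by (intro gen.intros)
  moreover have "agree I (pdir I n (\<lambda>t x y. h1 t x y + h2 t x y)) (\<lambda>t x y. h1' t x y + h2' t x y)"
    using h1(2) h2(2) unfolding agree_def
    using pdir_add_raw[OF _ gen_ok[OF f g gadd.hyps(1)] gen_ok[OF f g gadd.hyps(2)]] by simp
  ultimately show ?case by blast
qed

lemma smooth3_mult:
  fixes f g :: "real \<Rightarrow> real \<Rightarrow> real \<Rightarrow> complex"
  assumes f: "smooth3 I f" and g: "smooth3 I g"
  shows "smooth3 I (\<lambda>t x y. f t x y * g t x y)"
proof (rule smooth3_class[where Q = "gen I f g"])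
  show "ok I h" if "gen I f g h" for h using gen_ok[OF f g that] .
  show "\<exists>h'. gen I f g h' \<and> agree I (pdir I n h) h'" if "gen I f g h" for h n
    using gen_step[OF f g that] .
  show "gen I f g (\<lambda>t x y. f t x y * g t x y)"
    using gen.gbase[of I f g "[]" "[]"] by simp
qed

end



context ctx
begin

lemma s_pdt: "smooth3 I f \<Longrightarrow> smooth3 I (pdt I f)" using smooth3_pdir[of I f 0] by (simp add: pdir_def)
lemma s_pd1: "smooth3 I f \<Longrightarrow> smooth3 I (pd1 f)" using smooth3_pdir[of I f 1] by (simp add: pdir_def)
lemma s_pd2: "smooth3 I f \<Longrightarrow> smooth3 I (pd2 f)" using smooth3_pdir[of I f 2] by (simp add: pdir_def)
lemma s_minus: "smooth3 I f \<Longrightarrow> smooth3 I (\<lambda>t x y. - f t x y)"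
  by (rule smooth3_lin[OF bounded_linear_minus[OF bounded_linear_ident]])
lemma s_diff: "smooth3 I f \<Longrightarrow> smooth3 I g \<Longrightarrow> smooth3 I (\<lambda>t x y. f t x y - g t x y)"
  using smooth3_add[OF _ s_minus, of f g] by simp
lemma s_of_real: "smooth3 I (f :: real \<Rightarrow> real \<Rightarrow> real \<Rightarrow> real) \<Longrightarrow> smooth3 I (\<lambda>t x y. complex_of_real (f t x y))"
  by (rule smooth3_lin[OF bounded_linear_of_real])

lemmas s_rules = s_pdt s_pd1 s_pd2 s_minus s_diff s_of_real smooth3_add smooth3_mult smooth3_const

lemma pdir_add: "smooth3 I f \<Longrightarrow> smooth3 I g \<Longrightarrow> t \<in> I \<Longrightarrow>
   pdir I n (\<lambda>t x y. f t x y + g t x y) t x y = pdir I n f t x y + pdir I n g t x y"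
  by (rule pdir_add_raw) (auto intro: sm_ok0)
lemma pdir_lin: "bounded_linear L \<Longrightarrow> smooth3 I f \<Longrightarrow> t \<in> I \<Longrightarrow>
   pdir I n (\<lambda>t x y. L (f t x y)) t x y = L (pdir I n f t x y)"
  by (rule pdir_lin_raw) (auto intro: sm_ok0)
lemma pdir_mult: "smooth3 I f \<Longrightarrow> smooth3 I g \<Longrightarrow> t \<in> I \<Longrightarrow>
   pdir I n (\<lambda>t x y. f t x y * g t x y) t x y = pdir I n f t x y * g t x y + f t x y * pdir I n g t x y"
  for f g :: "real \<Rightarrow> real \<Rightarrow> real \<Rightarrow> complex"
  by (rule pdir_mult_raw) (auto intro: sm_ok0)
lemma pdir_minus: "smooth3 I f \<Longrightarrow> t \<in> I \<Longrightarrow>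
   pdir I n (\<lambda>t x y. - f t x y) t x y = - pdir I n f t x y"
  by (rule pdir_lin[OF bounded_linear_minus[OF bounded_linear_ident]])
lemma pdir_diff: "smooth3 I f \<Longrightarrow> smooth3 I g \<Longrightarrow> t \<in> I \<Longrightarrow>
   pdir I n (\<lambda>t x y. f t x y - g t x y) t x y = pdir I n f t x y - pdir I n g t x y"
  using pdir_add[OF _ s_minus, of f g t n x y] pdir_minus[of g t n x y] by simp
lemma pdir_of_real: "smooth3 I (f :: real \<Rightarrow> real \<Rightarrow> real \<Rightarrow> real) \<Longrightarrow> t \<in> I \<Longrightarrow>
   pdir I n (\<lambda>t x y. complex_of_real (f t x y)) t x y = complex_of_real (pdir I n f t x y)"
  by (rule pdir_lin[OF bounded_linear_of_real])

lemma pdt_add: "smooth3 I f \<Longrightarrow> smooth3 I g \<Longrightarrow> t \<in> I \<Longrightarrow>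
   pdt I (\<lambda>t x y. f t x y + g t x y) t x y = pdt I f t x y + pdt I g t x y"
  using pdir_add[of f g t 0 x y] by (simp add: pdir_def)
lemma pdt_diff: "smooth3 I f \<Longrightarrow> smooth3 I g \<Longrightarrow> t \<in> I \<Longrightarrow>
   pdt I (\<lambda>t x y. f t x y - g t x y) t x y = pdt I f t x y - pdt I g t x y"
  using pdir_diff[of f g t 0 x y] by (simp add: pdir_def)
lemma pdt_minus: "smooth3 I f \<Longrightarrow> t \<in> I \<Longrightarrow>
   pdt I (\<lambda>t x y. - f t x y) t x y = - pdt I f t x y"
  using pdir_minus[of f t 0 x y] by (simp add: pdir_def)
lemma pdt_mult: "smooth3 I f \<Longrightarrow> smooth3 I g \<Longrightarrow> t \<in> I \<Longrightarrow>
   pdt I (\<lambda>t x y. f t x y * g t x y) t x y = pdt I f t x y * g t x y + f t x y * pdt I g t x y"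
  for f g :: "real \<Rightarrow> real \<Rightarrow> real \<Rightarrow> complex"
  using pdir_mult[of f g t 0 x y] by (simp add: pdir_def)
lemma pdt_of_real: "smooth3 I (f :: real \<Rightarrow> real \<Rightarrow> real \<Rightarrow> real) \<Longrightarrow> t \<in> I \<Longrightarrow>
   pdt I (\<lambda>t x y. complex_of_real (f t x y)) t x y = complex_of_real (pdt I f t x y)"
  using pdir_of_real[of f t 0 x y] by (simp add: pdir_def)
lemma pdt_const: "t \<in> I \<Longrightarrow> pdt I (\<lambda>t x y. c) t x y = 0"
  using pdir_const_raw[of t 0 c x y] by (simp add: pdir_def)

lemma pd1_add: "smooth3 I f \<Longrightarrow> smooth3 I g \<Longrightarrow> t \<in> I \<Longrightarrow>
   pd1 (\<lambda>t x y. f t x y + g t x y) t x y = pd1 f t x y + pd1 g t x y"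
  using pdir_add[of f g t 1 x y] by (simp add: pdir_def)
lemma pd1_diff: "smooth3 I f \<Longrightarrow> smooth3 I g \<Longrightarrow> t \<in> I \<Longrightarrow>
   pd1 (\<lambda>t x y. f t x y - g t x y) t x y = pd1 f t x y - pd1 g t x y"
  using pdir_diff[of f g t 1 x y] by (simp add: pdir_def)
lemma pd1_minus: "smooth3 I f \<Longrightarrow> t \<in> I \<Longrightarrow>
   pd1 (\<lambda>t x y. - f t x y) t x y = - pd1 f t x y"
  using pdir_minus[of f t 1 x y] by (simp add: pdir_def)
lemma pd1_mult: "smooth3 I f \<Longrightarrow> smooth3 I g \<Longrightarrow> t \<in> I \<Longrightarrow>
   pd1 (\<lambda>t x y. f t x y * g t x y) t x y = pd1 f t x y * g t x y + f t x y * pd1 g t x y"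
  for f g :: "real \<Rightarrow> real \<Rightarrow> real \<Rightarrow> complex"
  using pdir_mult[of f g t 1 x y] by (simp add: pdir_def)
lemma pd1_of_real: "smooth3 I (f :: real \<Rightarrow> real \<Rightarrow> real \<Rightarrow> real) \<Longrightarrow> t \<in> I \<Longrightarrow>
   pd1 (\<lambda>t x y. complex_of_real (f t x y)) t x y = complex_of_real (pd1 f t x y)"
  using pdir_of_real[of f t 1 x y] by (simp add: pdir_def)
lemma pd1_const: "t \<in> I \<Longrightarrow> pd1 (\<lambda>t x y. c) t x y = 0"
  using pdir_const_raw[of t 1 c x y] by (simp add: pdir_def)

lemma pd2_add: "smooth3 I f \<Longrightarrow> smooth3 I g \<Longrightarrow> t \<in> I \<Longrightarrow>
   pd2 (\<lambda>t x y. f t x y + g t x y) t x y = pd2 f t x y + pd2 g t x y"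
  using pdir_add[of f g t 2 x y] by (simp add: pdir_def)
lemma pd2_diff: "smooth3 I f \<Longrightarrow> smooth3 I g \<Longrightarrow> t \<in> I \<Longrightarrow>
   pd2 (\<lambda>t x y. f t x y - g t x y) t x y = pd2 f t x y - pd2 g t x y"
  using pdir_diff[of f g t 2 x y] by (simp add: pdir_def)
lemma pd2_minus: "smooth3 I f \<Longrightarrow> t \<in> I \<Longrightarrow>
   pd2 (\<lambda>t x y. - f t x y) t x y = - pd2 f t x y"
  using pdir_minus[of f t 2 x y] by (simp add: pdir_def)
lemma pd2_mult: "smooth3 I f \<Longrightarrow> smooth3 I g \<Longrightarrow> t \<in> I \<Longrightarrow>
   pd2 (\<lambda>t x y. f t x y * g t x y) t x y = pd2 f t x y * g t x y + f t x y * pd2 g t x y"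
  for f g :: "real \<Rightarrow> real \<Rightarrow> real \<Rightarrow> complex"
  using pdir_mult[of f g t 2 x y] by (simp add: pdir_def)
lemma pd2_of_real: "smooth3 I (f :: real \<Rightarrow> real \<Rightarrow> real \<Rightarrow> real) \<Longrightarrow> t \<in> I \<Longrightarrow>
   pd2 (\<lambda>t x y. complex_of_real (f t x y)) t x y = complex_of_real (pd2 f t x y)"
  using pdir_of_real[of f t 2 x y] by (simp add: pdir_def)
lemma pd2_const: "t \<in> I \<Longrightarrow> pd2 (\<lambda>t x y. c) t x y = 0"
  using pdir_const_raw[of t 2 c x y] by (simp add: pdir_def)

lemmas d_rules = pdt_add pdt_diff pdt_minus pdt_mult pdt_of_real pdt_const pd1_add pd1_diff pd1_minus pd1_mult pd1_of_real pd1_const pd2_add pd2_diff pd2_minus pd2_mult pd2_of_real pd2_const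

end



context ctx
begin

lemma sm_hvd: "smooth3 I f \<Longrightarrow> t \<in> I \<Longrightarrow>
  (line n f t x y has_vector_derivative pdir I n f t x y) (at (pt n t x y) within dm I n)"
  unfolding pdir_line using ok_diff[OF sm_ok0] vector_derivative_works by blast

lemma hvd0: "smooth3 I f \<Longrightarrow> t \<in> I \<Longrightarrow> ((\<lambda>s. f s x y) has_vector_derivative pdt I f t x y) (at t within I)"
  using sm_hvd[of f t 0 x y] by (simp add: line_def pt_def dm_def pdir_def)
lemma hvd1: "smooth3 I f \<Longrightarrow> t \<in> I \<Longrightarrow> ((\<lambda>s. f t s y) has_vector_derivative pd1 f t x y) (at x within UNIV)"
  using sm_hvd[of f t 1 x y] by (simp add: line_def pt_def dm_def pdir_def)
lemma hvd2: "smooth3 I f \<Longrightarrow> t \<in> I \<Longrightarrow> ((\<lambda>s. f t x s) has_vector_derivative pd2 f t x y) (at y within UNIV)"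
  using sm_hvd[of f t 2 x y] by (simp add: line_def pt_def dm_def pdir_def)

lemma sm_cont: "smooth3 I f \<Longrightarrow> continuous_on (I \<times> UNIV) (\<lambda>(t, x, y). f t x y)"
  using sm_ok0 ok_def by blast

lemma cont_xy:
  assumes c: "continuous_on (I \<times> UNIV) (\<lambda>(t, x, y). h t x y)" and t: "t \<in> I"
  shows "continuous_on UNIV (\<lambda>p. h t (fst p) (snd p))"
proof -
  have "continuous_on UNIV (\<lambda>p. (\<lambda>(t, x, y). h t x y) ((\<lambda>p. (t, fst p, snd p)) p))"
    by (rule continuous_on_compose2[OF c]) (use t in \<open>auto intro!: continuous_intros\<close>)
  then show ?thesis by (simp add: case_prod_beta)
qed

lemma cont_t1:
  assumes c: "continuous_on (I \<times> UNIV) (\<lambda>(t, x, y). h t x y)"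
  shows "continuous_on (I \<times> UNIV) (\<lambda>p. h (fst p) (snd p) y)"
proof -
  have "continuous_on (I \<times> UNIV) (\<lambda>p. (\<lambda>(t, x, y). h t x y) ((\<lambda>p. (fst p, snd p, y)) p))"
    by (rule continuous_on_compose2[OF c]) (auto intro!: continuous_intros)
  then show ?thesis by (simp add: case_prod_beta)
qed

lemma cont_t2:
  assumes c: "continuous_on (I \<times> UNIV) (\<lambda>(t, x, y). h t x y)"
  shows "continuous_on (I \<times> UNIV) (\<lambda>p. h (fst p) x (snd p))"
proof -
  have "continuous_on (I \<times> UNIV) (\<lambda>p. (\<lambda>(t, x, y). h t x y) ((\<lambda>p. (fst p, x, snd p)) p))"
    by (rule continuous_on_compose2[OF c]) (auto intro!: continuous_intros)
  then show ?thesis by (simp add: case_prod_beta)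
qed

lemma comm12:
  assumes g: "smooth3 I g" and t: "t \<in> I"
  shows "pd2 (pd1 g) t x y = pd1 (pd2 g) t x y"
  by (rule clairaut[where S=UNIV and T=UNIV and F="\<lambda>u v. g t u v" and Fa="\<lambda>u v. pd1 g t u v"
        and Fb="\<lambda>u v. pd2 g t u v" and Fab="\<lambda>u v. pd2 (pd1 g) t u v" and Fba="\<lambda>u v. pd1 (pd2 g) t u v"])
     (auto intro: hvd1[OF g t] hvd2[OF g t] hvd2[OF s_pd1[OF g] t] hvd1[OF s_pd2[OF g] t]
        cont_xy[OF sm_cont[OF s_pd2[OF s_pd1[OF g]]] t] cont_xy[OF sm_cont[OF s_pd1[OF s_pd2[OF g]]] t])

lemma comm_t1:
  assumes g: "smooth3 I g" and t: "t \<in> I"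
  shows "pd1 (pdt I g) t x y = pdt I (pd1 g) t x y"
  by (rule clairaut[where S=I and T=UNIV and F="\<lambda>u v. g u v y" and Fa="\<lambda>u v. pdt I g u v y"
        and Fb="\<lambda>u v. pd1 g u v y" and Fab="\<lambda>u v. pd1 (pdt I g) u v y" and Fba="\<lambda>u v. pdt I (pd1 g) u v y"])
     (auto intro: conv lim t hvd0[OF g] hvd1[OF g] hvd1[OF s_pdt[OF g]] hvd0[OF s_pd1[OF g]]
        cont_t1[OF sm_cont[OF s_pd1[OF s_pdt[OF g]]]] cont_t1[OF sm_cont[OF s_pdt[OF s_pd1[OF g]]]])

lemma comm_t2:
  assumes g: "smooth3 I g" and t: "t \<in> I"
  shows "pd2 (pdt I g) t x y = pdt I (pd2 g) t x y"
  by (rule clairaut[where S=I and T=UNIV and F="\<lambda>u v. g u x v" and Fa="\<lambda>u v. pdt I g u x v"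
        and Fb="\<lambda>u v. pd2 g u x v" and Fab="\<lambda>u v. pd2 (pdt I g) u x v" and Fba="\<lambda>u v. pdt I (pd2 g) u x v"])
     (auto intro: conv lim t hvd0[OF g] hvd2[OF g] hvd2[OF s_pdt[OF g]] hvd0[OF s_pd2[OF g]]
        cont_t2[OF sm_cont[OF s_pd2[OF s_pdt[OF g]]]] cont_t2[OF sm_cont[OF s_pdt[OF s_pd2[OF g]]]])

end



lemma Az_fun: "Az A1 A2 = (\<lambda>t x y. 1/2 * complex_of_real (A1 t x y) + 1/(2*\<i>) * complex_of_real (A2 t x y))"
  by (intro ext) (simp add: Az_def)
lemma Azbar_fun: "Azbar A1 A2 = (\<lambda>t x y. 1/2 * complex_of_real (A1 t x y) - 1/(2*\<i>) * complex_of_real (A2 t x y))"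
  by (intro ext) (simp add: Azbar_def)
lemma cDz_fun: "cDz A1 A2 f = (\<lambda>t x y. (1/2) * pd1 f t x y + 1 / (2 * \<i>) * pd2 f t x y + \<i> * Az A1 A2 t x y * f t x y)"
  by (intro ext) (simp add: cDz_def)
lemma cDzbar_fun: "cDzbar A1 A2 f = (\<lambda>t x y. (1/2) * pd1 f t x y - 1 / (2 * \<i>) * pd2 f t x y + \<i> * Azbar A1 A2 t x y * f t x y)"
  by (intro ext) (simp add: cDzbar_def)
lemma cDt_fun: "cDt I At f = (\<lambda>t x y. pdt I f t x y + \<i> * complex_of_real (At t x y) * f t x y)"
  by (intro ext) (simp add: cDt_def)

lemma inv2i: "1 / (2 * \<i>) = - \<i> / 2" by (simp add: field_simps)

context ctx
begin

lemma comm_zzbar: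
  assumes g: "smooth3 I g" and a1: "smooth3 I A1" and a2: "smooth3 I A2" and t: "t \<in> I"
  shows "cDz A1 A2 (cDzbar A1 A2 g) t x y = cDzbar A1 A2 (cDz A1 A2 g) t x y + \<i> * Fzzbar A1 A2 t x y * g t x y"
  apply (simp only: cDz_fun cDzbar_fun Az_fun Azbar_fun Fzzbar_def d_rules s_rules comm12 comm_t1 comm_t2 g a1 a2 t)
  apply (simp add: inv2i algebra_simps)
  done

lemma comm_tzbar:
  assumes g: "smooth3 I g" and a0: "smooth3 I At" and a1: "smooth3 I A1" and a2: "smooth3 I A2" and t: "t \<in> I"
  shows "cDt I At (cDzbar A1 A2 g) t x y = cDzbar A1 A2 (cDt I At g) t x y + \<i> * Ftzbar I At A1 A2 t x y * g t x y"
  apply (simp only: cDt_fun cDzbar_fun Azbar_fun Ftzbar_def d_rules s_rules comm12 comm_t1 comm_t2 g a0 a1 a2 t)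
  apply (simp add: inv2i algebra_simps)
  done

lemma lin_zbar:
  assumes u: "smooth3 I u" and v: "smooth3 I v" and a1: "smooth3 I A1" and a2: "smooth3 I A2" and t: "t \<in> I"
  shows "cDzbar A1 A2 (\<lambda>t x y. a * u t x y + b * v t x y) t x y = a * cDzbar A1 A2 u t x y + b * cDzbar A1 A2 v t x y"
  apply (simp only: cDzbar_fun Azbar_fun d_rules s_rules u v a1 a2 t)
  apply (simp add: inv2i algebra_simps)
  done

lemma s_cDzbar: "smooth3 I g \<Longrightarrow> smooth3 I A1 \<Longrightarrow> smooth3 I A2 \<Longrightarrow> smooth3 I (cDzbar A1 A2 g)"
  by (simp only: cDzbar_fun Azbar_fun s_rules)
lemma s_cDz: "smooth3 I g \<Longrightarrow> smooth3 I A1 \<Longrightarrow> smooth3 I A2 \<Longrightarrow> smooth3 I (cDz A1 A2 g)"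
  by (simp only: cDz_fun Az_fun s_rules)
lemma s_cDt: "smooth3 I g \<Longrightarrow> smooth3 I At \<Longrightarrow> smooth3 I (cDt I At g)"
  by (simp only: cDt_fun s_rules)

end

lemma zero_zbar: "(\<And>x y. h t x y = 0) \<Longrightarrow> cDzbar A1 A2 h t x y = 0"
  by (simp add: cDzbar_def pd1_def pd2_def)




lemma interval_limpt:
  fixes I :: "real set"
  assumes "is_interval I" "interior I \<noteq> {}" "t \<in> I"
  shows "t islimpt I"
proof -
  have cv: "convex I" using assms(1) is_interval_convex_1 by blast
  have "t \<in> closure (interior I)" using convex_closure_interior[OF cv assms(2)] assms(3) closure_subset by blast
  then have "t \<in> interior I \<or> t islimpt interior I" by (simp add: closure_def)
  then have "t islimpt interior I"
    using interior_limit_point interior_interior by metis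
  then show ?thesis using interior_subset islimpt_subset by blast
qed

theorem proposition2p1:
  fixes I :: "real set"
    and phi :: "real \<Rightarrow> real \<Rightarrow> real \<Rightarrow> complex"
    and At A1 A2 :: "real \<Rightarrow> real \<Rightarrow> real \<Rightarrow> real"
  assumes I_interval: "is_interval I" and I_nondeg: "interior I \<noteq> {}"
    and smooth_phi: "smooth3 I phi"
    and smooth_At: "smooth3 I At" and smooth_A1: "smooth3 I A1" and smooth_A2: "smooth3 I A2"
    and eq1: "\<And>t x y. t \<in> I \<Longrightarrow>
       Ftzbar I At A1 A2 t x y = cnj (phi t x y) * cDzbar A1 A2 phi t x y"
    and eq2: "\<And>t x y. t \<in> I \<Longrightarrow>
       Fzzbar A1 A2 t x y = 1 / (4 * \<i>) * of_real ((cmod (phi t x y))\<^sup>2)"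
    and eq3: "\<And>t x y. t \<in> I \<Longrightarrow>
       \<i> * cDt I At phi t x y + 4 * cDz A1 A2 (cDzbar A1 A2 phi) t x y = 0"
  shows "\<forall>t\<in>I. \<forall>x y.
      \<i> * cDt I At (cDzbar A1 A2 phi) t x y
        + 4 * cDz A1 A2 (cDzbar A1 A2 (cDzbar A1 A2 phi)) t x y = 0
    \<and> \<i> * cDt I At (cDzbar A1 A2 (cDzbar A1 A2 phi)) t x y
        + 4 * cDzbar A1 A2 (cDz A1 A2 (cDzbar A1 A2 (cDzbar A1 A2 phi))) t x y
        + cnj (phi t x y) * (cDzbar A1 A2 phi t x y)\<^sup>2 = 0"
proof -
  interpret ctx I
  proof
    show "convex I" using I_interval is_interval_convex_1 by blast
    show "t islimpt I" if "t \<in> I" for t using interval_limpt[OF I_interval I_nondeg that] .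
  qed
  define psi where "psi = cDzbar A1 A2 phi"
  define chi where "chi = cDzbar A1 A2 psi"
  have s_psi: "smooth3 I psi" unfolding psi_def by (rule s_cDzbar[OF smooth_phi smooth_A1 smooth_A2])
  have s_chi: "smooth3 I chi" unfolding chi_def by (rule s_cDzbar[OF s_psi smooth_A1 smooth_A2])
  have s1: "smooth3 I (cDt I At phi)" by (rule s_cDt[OF smooth_phi smooth_At])
  have s2: "smooth3 I (cDz A1 A2 psi)" by (rule s_cDz[OF s_psi smooth_A1 smooth_A2])
  have s3: "smooth3 I (cDt I At psi)" by (rule s_cDt[OF s_psi smooth_At])
  have s4: "smooth3 I (cDz A1 A2 chi)" by (rule s_cDz[OF s_chi smooth_A1 smooth_A2])
  have nsq: "complex_of_real ((cmod z)\<^sup>2) = cnj z * z" for z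
    by (subst complex_norm_square) (rule mult.commute)
  have nsq2: "(complex_of_real (cmod z))\<^sup>2 = cnj z * z" for z
    using nsq[of z] by simp
  have claim1: "\<i> * cDt I At psi t x y + 4 * cDz A1 A2 chi t x y = 0" if t: "t \<in> I" for t x y
  proof -
    have "\<i> * cDt I At psi t x y + 4 * cDz A1 A2 chi t x y
      = \<i> * (cDzbar A1 A2 (cDt I At phi) t x y + \<i> * Ftzbar I At A1 A2 t x y * phi t x y)
        + 4 * (cDzbar A1 A2 (cDz A1 A2 psi) t x y + \<i> * Fzzbar A1 A2 t x y * psi t x y)"
      unfolding psi_def chi_def
      using comm_tzbar[OF smooth_phi smooth_At smooth_A1 smooth_A2 t]
        comm_zzbar[OF s_psi[unfolded psi_def] smooth_A1 smooth_A2 t] by simp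
    also have "\<dots> = cDzbar A1 A2 (\<lambda>t x y. \<i> * cDt I At phi t x y + 4 * cDz A1 A2 psi t x y) t x y
        - Ftzbar I At A1 A2 t x y * phi t x y + 4 * \<i> * Fzzbar A1 A2 t x y * psi t x y"
      using lin_zbar[OF s1 s2 smooth_A1 smooth_A2 t, of "\<i>" 4] by (simp add: algebra_simps)
    finally have E: "\<i> * cDt I At psi t x y + 4 * cDz A1 A2 chi t x y = cDzbar A1 A2 (\<lambda>t x y. \<i> * cDt I At phi t x y + 4 * cDz A1 A2 psi t x y) t x y
        - Ftzbar I At A1 A2 t x y * phi t x y + 4 * \<i> * Fzzbar A1 A2 t x y * psi t x y" .
    have z1: "cDzbar A1 A2 (\<lambda>t x y. \<i> * cDt I At phi t x y + 4 * cDz A1 A2 psi t x y) t x y = 0"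
      by (rule zero_zbar) (use eq3[OF t] in \<open>simp add: psi_def\<close>)
    have z2: "Ftzbar I At A1 A2 t x y * phi t x y = 4 * \<i> * Fzzbar A1 A2 t x y * psi t x y"
      using eq1[OF t] eq2[OF t] by (simp add: psi_def nsq nsq2)
    show ?thesis unfolding E z1 z2 by simp
  qed
  have claim2: "\<i> * cDt I At chi t x y + 4 * cDzbar A1 A2 (cDz A1 A2 chi) t x y
      + cnj (phi t x y) * (psi t x y)\<^sup>2 = 0" if t: "t \<in> I" for t x y
  proof -
    have "\<i> * cDt I At chi t x y + 4 * cDzbar A1 A2 (cDz A1 A2 chi) t x y
      + cnj (phi t x y) * (psi t x y)\<^sup>2
      = \<i> * (cDzbar A1 A2 (cDt I At psi) t x y + \<i> * Ftzbar I At A1 A2 t x y * psi t x y)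
        + 4 * cDzbar A1 A2 (cDz A1 A2 chi) t x y + cnj (phi t x y) * (psi t x y)\<^sup>2"
      unfolding chi_def
      using comm_tzbar[OF s_psi smooth_At smooth_A1 smooth_A2 t] by simp
    also have "\<dots> = cDzbar A1 A2 (\<lambda>t x y. \<i> * cDt I At psi t x y + 4 * cDz A1 A2 chi t x y) t x y
        - Ftzbar I At A1 A2 t x y * psi t x y + cnj (phi t x y) * (psi t x y)\<^sup>2"
      using lin_zbar[OF s3 s4 smooth_A1 smooth_A2 t, of "\<i>" 4] by (simp add: algebra_simps)
    finally have E: "\<i> * cDt I At chi t x y + 4 * cDzbar A1 A2 (cDz A1 A2 chi) t x y
      + cnj (phi t x y) * (psi t x y)\<^sup>2 = cDzbar A1 A2 (\<lambda>t x y. \<i> * cDt I At psi t x y + 4 * cDz A1 A2 chi t x y) t x y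
        - Ftzbar I At A1 A2 t x y * psi t x y + cnj (phi t x y) * (psi t x y)\<^sup>2" .
    have z1: "cDzbar A1 A2 (\<lambda>t x y. \<i> * cDt I At psi t x y + 4 * cDz A1 A2 chi t x y) t x y = 0"
      by (rule zero_zbar) (use claim1[OF t] in simp)
    have z2: "Ftzbar I At A1 A2 t x y * psi t x y = cnj (phi t x y) * (psi t x y)\<^sup>2"
      using eq1[OF t] by (simp add: psi_def power2_eq_square)
    show ?thesis unfolding E z1 z2 by simp
  qed
  show ?thesis
    using claim1 claim2 unfolding psi_def chi_def by blast
qed


end
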